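(* For a ternary cubic form $f$ the following are equivalent: (1) $\Delta=0$ and $F_{6u}\neq0$; (2) $f=a_0a_x^3+b_0b_x^3$ for some nonzero $a_0,b_0\in\mathbb C$ and linear forms $a_x,b_x$ with $\{a_x,b_x\}$ linearly independent; (3) $f=a_xb_xc_x$ for linear forms $a_x,b_x,c_x$ such that $\{a_x,b_x,c_x\}$ is linearly dependent but each pair from it is linearly independent.
   Context: Forms are homogeneous polynomials with complex coefficients in $x=(x_1,x_2,x_3)$; $u=(u_1,u_2,u_3)$ are indeterminates and $u_x=\sum u_ix_i$. The $n$-th transvectant is $J^n[f,g,h]=\big(\Omega^n(f(x)g(y)h(z))\big)|_{y=z=x}$, where $\Omega$ is the determinant of the operator matrix with rows $(\partial/\partial x_i)$, $(\partial/\partial y_i)$, $(\partial/\partial z_i)$, and $u$ is treated as constant. For a ternary cubic $f$: - $\Delta=\tfrac1{12}J^2[f,f,f]$ (the Hessian); - $\theta=\tfrac14J^2[f,f,u_x^2]$; - $F_{6u}=\tfrac1{3072}J^2[\theta,\theta,u_x^2]$ (a polynomial in $u$; "$F_{6u}\ne0$" means it is not the zero polynomial). *)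

theory Defs
  imports Complex_Main "HOL-Analysis.Finite_Cartesian_Product" "HOL-Analysis.Derivative" "HOL-Combinatorics.Permutations"
begin

text \<open>Ternary forms are represented as polynomial functions on complex 3-space
  (equivalent to polynomials since the field is infinite).\<close>

type_synonym form = "complex^3 \<Rightarrow> complex"

definition ternary_cubic :: "form \<Rightarrow> bool" where
  "ternary_cubic f \<longleftrightarrow> (\<exists>c :: nat \<Rightarrow> nat \<Rightarrow> complex.
     \<forall>x. f x = (\<Sum>i\<le>3. \<Sum>j\<le>3 - i. c i j * (x$1)^i * (x$2)^j * (x$3)^(3 - i - j)))"

definition lin :: "complex^3 \<Rightarrow> complex^3 \<Rightarrow> complex" where
  "lin a x = (\<Sum>i\<in>UNIV. a$i * x$i)"

definition pd :: "3 \<Rightarrow> form \<Rightarrow> form" where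
  "pd i f x = deriv (\<lambda>t. f (\<chi> j. if j = i then t else x$j)) (x$i)"

fun pds :: "3 list \<Rightarrow> form \<Rightarrow> form" where
  "pds [] f = f"
| "pds (i # is) f = pd i (pds is f)"

text \<open>n-th transvectant: Omega = sum over permutations s of sign s *
  d/dx_{s 1} d/dy_{s 2} d/dz_{s 3}; Omega^n applied to f(x)g(y)h(z),
  then y = z = x.\<close>
definition J :: "nat \<Rightarrow> form \<Rightarrow> form \<Rightarrow> form \<Rightarrow> form" where
  "J n f g h x = (\<Sum>ss\<in>Pi\<^sub>E {..<n} (\<lambda>_. {s::3\<Rightarrow>3. s permutes UNIV}).
      (\<Prod>k<n. of_int (sign (ss k))) *
      pds (map (\<lambda>k. ss k 1) [0..<n]) f x *
      pds (map (\<lambda>k. ss k 2) [0..<n]) g x *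
      pds (map (\<lambda>k. ss k 3) [0..<n]) h x)"

definition Hessian :: "form \<Rightarrow> form" where
  "Hessian f = (\<lambda>x. J 2 f f f x / 12)"

definition theta :: "form \<Rightarrow> complex^3 \<Rightarrow> form" where
  "theta f u = (\<lambda>x. J 2 f f (\<lambda>y. (lin u y)^2) x / 4)"

text \<open>F_{6u}, as a function of u (and formally x, on which it does not depend).\<close>
definition F6u :: "form \<Rightarrow> complex^3 \<Rightarrow> form" where
  "F6u f u = (\<lambda>x. J 2 (theta f u) (theta f u) (\<lambda>y. (lin u y)^2) x / 3072)"

definition lin_indep2 :: "complex^3 \<Rightarrow> complex^3 \<Rightarrow> bool" where
  "lin_indep2 a b \<longleftrightarrow> (\<forall>\<alpha> \<beta>. (\<forall>x. \<alpha> * lin a x + \<beta> * lin b x = 0) \<longrightarrow> \<alpha> = 0 \<and> \<beta> = 0)"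

definition lin_dep3 :: "complex^3 \<Rightarrow> complex^3 \<Rightarrow> complex^3 \<Rightarrow> bool" where
  "lin_dep3 a b c \<longleftrightarrow> (\<exists>\<alpha> \<beta> \<gamma>. (\<alpha>, \<beta>, \<gamma>) \<noteq> (0, 0, 0) \<and>
      (\<forall>x. \<alpha> * lin a x + \<beta> * lin b x + \<gamma> * lin c x = 0))"

end

theory Submission
  imports Defs "HOL-Analysis.Determinants" "HOL-Analysis.Complex_Transcendental"
    "HOL-Computational_Algebra.Fundamental_Theorem_Algebra"
begin

definition alt3 :: "(3 \<Rightarrow> 3 \<Rightarrow> 3 \<Rightarrow> complex) \<Rightarrow> complex" where
  "alt3 g = g 1 2 3 + g 2 3 1 + g 3 1 2 - g 1 3 2 - g 2 1 3 - g 3 2 1"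

lemma sum_perm3: "(\<Sum>p\<in>{p. p permutes (UNIV::3 set)}. of_int (sign p) * g (p 1) (p 2) (p 3)) = alt3 g"
proof -
  have f123: "finite {2::3, 3}" "1 \<notin> {2::3, 3}"
    by auto
  have f23: "finite {3::3}" "2 \<notin> {3::3}"
    by auto
  show ?thesis
    unfolding UNIV_3
    unfolding sum_over_permutations_insert[OF f123]
    unfolding sum_over_permutations_insert[OF f23]
    unfolding permutes_sing
    by (simp add: alt3_def sign_swap_id permutation_swap_id sign_compose swap_id_eq algebra_simps)
qed

type_synonym mat = "3 \<Rightarrow> 3 \<Rightarrow> complex"

definition Dm :: "mat \<Rightarrow> mat \<Rightarrow> mat \<Rightarrow> complex" where
  "Dm A B C = (\<Sum>s\<in>{p. p permutes (UNIV::3 set)}. \<Sum>t\<in>{p. p permutes (UNIV::3 set)}.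
      of_int (sign s) * of_int (sign t) * A (s 1) (t 1) * B (s 2) (t 2) * C (s 3) (t 3))"

lemma Dm_alt: "Dm A B C = alt3 (\<lambda>i1 i2 i3. alt3 (\<lambda>j1 j2 j3. A i1 j1 * B i2 j2 * C i3 j3))"
proof -
  have "Dm A B C = (\<Sum>s\<in>{p. p permutes (UNIV::3 set)}. of_int (sign s) *
      (\<Sum>t\<in>{p. p permutes (UNIV::3 set)}. of_int (sign t) * ((\<lambda>j1 j2 j3. A (s 1) j1 * B (s 2) j2 * C (s 3) j3) (t 1) (t 2) (t 3))))"
    unfolding Dm_def by (simp add: sum_distrib_left mult_ac)
  also have "\<dots> = (\<Sum>s\<in>{p. p permutes (UNIV::3 set)}. of_int (sign s) *
      (\<lambda>i1 i2 i3. alt3 (\<lambda>j1 j2 j3. A i1 j1 * B i2 j2 * C i3 j3)) (s 1) (s 2) (s 3))"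
  proof (rule sum.cong[OF refl])
    fix s assume "s \<in> {p. p permutes (UNIV::3 set)}"
    show "of_int (sign s) *
      (\<Sum>t\<in>{p. p permutes (UNIV::3 set)}. of_int (sign t) * ((\<lambda>j1 j2 j3. A (s 1) j1 * B (s 2) j2 * C (s 3) j3) (t 1) (t 2) (t 3))) =
      of_int (sign s) * (\<lambda>i1 i2 i3. alt3 (\<lambda>j1 j2 j3. A i1 j1 * B i2 j2 * C i3 j3)) (s 1) (s 2) (s 3)"
      using sum_perm3[of "\<lambda>j1 j2 j3. A (s 1) j1 * B (s 2) j2 * C (s 3) j3"] by simp
  qed
  also have "\<dots> = alt3 (\<lambda>i1 i2 i3. alt3 (\<lambda>j1 j2 j3. A i1 j1 * B i2 j2 * C i3 j3))"
    by (rule sum_perm3)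
  finally show ?thesis .
qed

lemma sum_PiE2:
  fixes F :: "'a \<Rightarrow> 'a \<Rightarrow> complex"
  shows "(\<Sum>ss\<in>Pi\<^sub>E {..<2::nat} (\<lambda>_. S). F (ss 0) (ss 1)) = (\<Sum>s\<in>S. \<Sum>t\<in>S. F s t)"
proof -
  define h where "h = (\<lambda>(s::'a,t::'a). (\<lambda>k::nat. if k = 0 then s else if k = 1 then t else undefined))"
  have bij: "bij_betw h (S \<times> S) (Pi\<^sub>E {..<2::nat} (\<lambda>_. S))"
  proof (unfold bij_betw_def, intro conjI)
    show "inj_on h (S \<times> S)"
      unfolding inj_on_def h_def by (auto simp: fun_eq_iff)
    show "h ` (S \<times> S) = Pi\<^sub>E {..<2} (\<lambda>_. S)"
    proof
      show "h ` (S \<times> S) \<subseteq> Pi\<^sub>E {..<2} (\<lambda>_. S)"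
        by (auto simp: h_def PiE_def extensional_def)
    next
      show "Pi\<^sub>E {..<2} (\<lambda>_. S) \<subseteq> h ` (S \<times> S)"
      proof
        fix ss assume ss: "ss \<in> Pi\<^sub>E {..<2::nat} (\<lambda>_. S)"
        have "ss = h (ss 0, ss 1)"
          using ss by (auto simp: h_def fun_eq_iff PiE_def extensional_def)
        moreover have "(ss 0, ss 1) \<in> S \<times> S" using ss by (auto simp: PiE_def)
        ultimately show "ss \<in> h ` (S \<times> S)" by blast
      qed
    qed
  qed
  have "(\<Sum>ss\<in>Pi\<^sub>E {..<2::nat} (\<lambda>_. S). F (ss 0) (ss 1)) = (\<Sum>p\<in>S \<times> S. F (h p 0) (h p 1))"
    using sum.reindex_bij_betw[OF bij, of "\<lambda>ss. F (ss 0) (ss 1)"] by simp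
  also have "\<dots> = (\<Sum>p\<in>S \<times> S. F (fst p) (snd p))"
    by (rule sum.cong) (auto simp: h_def)
  also have "\<dots> = (\<Sum>s\<in>S. \<Sum>t\<in>S. F s t)"
    by (simp add: sum.cartesian_product case_prod_beta)
  finally show ?thesis .
qed

definition Hm :: "form \<Rightarrow> complex^3 \<Rightarrow> mat" where
  "Hm f x = (\<lambda>i j. pd i (pd j f) x)"

lemma J2: "J 2 f g h x = Dm (Hm f x) (Hm g x) (Hm h x)"
proof -
  have "J 2 f g h x = (\<Sum>ss\<in>Pi\<^sub>E {..<2::nat} (\<lambda>_. {s::3\<Rightarrow>3. s permutes UNIV}).
      (\<lambda>s t. of_int (sign s) * of_int (sign t) * Hm f x (s 1) (t 1) * Hm g x (s 2) (t 2) * Hm h x (s 3) (t 3))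
      (ss 0) (ss 1))"
    unfolding J_def Hm_def
    by (simp add: numeral_2_eq_2 lessThan_Suc upt_rec mult_ac)
  also have "\<dots> = Dm (Hm f x) (Hm g x) (Hm h x)"
    using sum_PiE2[of "\<lambda>s t. of_int (sign s) * of_int (sign t) * Hm f x (s 1) (t 1) * Hm g x (s 2) (t 2) * Hm h x (s 3) (t 3)"]
    unfolding Dm_def by simp
  finally show ?thesis .
qed

definition tri :: "(3\<Rightarrow>3\<Rightarrow>3\<Rightarrow>complex) \<Rightarrow> complex^3 \<Rightarrow> complex^3 \<Rightarrow> complex^3 \<Rightarrow> complex" where
 "tri T a b c = (\<Sum>i\<in>UNIV. \<Sum>j\<in>UNIV. \<Sum>k\<in>UNIV. T i j k * a$i * b$j * c$k)"
definition bil :: "mat \<Rightarrow> complex^3 \<Rightarrow> complex^3 \<Rightarrow> complex" where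
 "bil Q a b = (\<Sum>i\<in>UNIV. \<Sum>j\<in>UNIV. Q i j * a$i * b$j)"
definition linf :: "(3 \<Rightarrow> complex) \<Rightarrow> complex^3 \<Rightarrow> complex" where
 "linf L a = (\<Sum>i\<in>UNIV. L i * a$i)"
definition symT :: "(3\<Rightarrow>3\<Rightarrow>3\<Rightarrow>complex) \<Rightarrow> bool" where
 "symT T \<longleftrightarrow> (\<forall>i j k. T i j k = T j i k \<and> T i j k = T i k j)"
definition symQ :: "mat \<Rightarrow> bool" where "symQ Q \<longleftrightarrow> (\<forall>i j. Q i j = Q j i)"
definition ev :: "3 \<Rightarrow> complex^3" where "ev l = (\<chi> j. if j = l then 1 else 0)"

lemma upd_eq: "(\<chi> j. if j = l then t else x$j) = x + (t - x$l) *s ev l"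
  by (simp add: vec_eq_iff ev_def)

lemma tri_add1: "tri T (a + b) c d = tri T a c d + tri T b c d"
  by (simp add: tri_def algebra_simps sum.distrib)
lemma tri_add2: "tri T a (b + c) d = tri T a b d + tri T a c d"
  by (simp add: tri_def algebra_simps sum.distrib)
lemma tri_add3: "tri T a b (c + d) = tri T a b c + tri T a b d"
  by (simp add: tri_def algebra_simps sum.distrib)
lemma tri_sm1: "tri T (s *s a) c d = s * tri T a c d"
  by (simp add: tri_def sum_distrib_left mult_ac)
lemma tri_sm2: "tri T a (s *s c) d = s * tri T a c d"
  by (simp add: tri_def sum_distrib_left mult_ac)
lemma tri_sm3: "tri T a c (s *s d) = s * tri T a c d"
  by (simp add: tri_def sum_distrib_left mult_ac)

lemma tri_swap12: assumes "symT T" shows "tri T a b c = tri T b a c"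
proof -
  have "tri T b a c = (\<Sum>j\<in>UNIV. \<Sum>i\<in>UNIV. \<Sum>k\<in>UNIV. T i j k * b$i * a$j * c$k)"
    unfolding tri_def by (rule sum.swap)
  also have "\<dots> = tri T a b c" unfolding tri_def using assms unfolding symT_def
    by (intro sum.cong refl) (metis mult.commute mult.left_commute)
  finally show ?thesis by simp
qed

lemma tri_swap23: assumes "symT T" shows "tri T a b c = tri T a c b"
proof -
  have "tri T a c b = (\<Sum>i\<in>UNIV. \<Sum>k\<in>UNIV. \<Sum>j\<in>UNIV. T i j k * a$i * c$j * b$k)"
    unfolding tri_def by (intro sum.cong refl sum.swap)
  also have "\<dots> = tri T a b c" unfolding tri_def using assms unfolding symT_def
    by (intro sum.cong refl) (metis mult.commute mult.left_commute)
  finally show ?thesis by simp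
qed

lemma tri_upd:
  assumes "symT T"
  shows "tri T (x + s *s e) (x + s *s e) (x + s *s e) =
    tri T x x x + 3 * tri T e x x * s + 3 * tri T e e x * s^2 + tri T e e e * s^3"
proof -
  have 1: "tri T x x e = tri T e x x" "tri T x e x = tri T e x x" "tri T x e e = tri T e e x" "tri T e x e = tri T e e x"
    using tri_swap12[OF assms] tri_swap23[OF assms] by metis+
  show ?thesis
    apply (simp only: tri_add1 tri_add2 tri_add3 tri_sm1 tri_sm2 tri_sm3 1)
    apply (simp add: power2_eq_square power3_eq_cube algebra_simps)
    done
qed

lemma deriv_cubic: "deriv (\<lambda>t. A + B*(t - c) + C*(t-c)^2 + D*(t-c)^3) c = (B::complex)"
proof -
  have "((\<lambda>t. A + B*(t - c) + C*(t-c)^2 + D*(t-c)^3) has_field_derivative B) (at c)"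
    by (auto intro!: derivative_eq_intros)
  then show ?thesis by (rule DERIV_imp_deriv)
qed

lemma tri_ev: "tri T (ev l) x y = bil (\<lambda>j k. T l j k) x y"
proof -
  have "tri T (ev l) x y = (\<Sum>i\<in>UNIV. if i = l then (\<Sum>j\<in>UNIV. \<Sum>k\<in>UNIV. T l j k * x$j * y$k) else 0)"
    unfolding tri_def ev_def by (intro sum.cong refl) auto
  then show ?thesis by (simp add: bil_def)
qed

lemma pd_tri:
  assumes "symT T" "\<And>x. f x = tri T x x x"
  shows "pd l f = (\<lambda>x. bil (\<lambda>j k. 3 * T l j k) x x)"
proof
  fix x
  have "(\<lambda>t. f (\<chi> j. if j = l then t else x$j)) =
    (\<lambda>t. tri T x x x + (3 * tri T (ev l) x x) * (t - x$l) + (3 * tri T (ev l) (ev l) x) * (t - x$l)^2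
       + tri T (ev l) (ev l) (ev l) * (t - x$l)^3)"
    by (simp only: assms(2) upd_eq tri_upd[OF assms(1)])
  then have "pd l f x = 3 * tri T (ev l) x x"
    unfolding pd_def by (simp only: deriv_cubic)
  also have "\<dots> = bil (\<lambda>j k. 3 * T l j k) x x"
    by (simp add: tri_ev bil_def sum_distrib_left mult_ac)
  finally show "pd l f x = bil (\<lambda>j k. 3 * T l j k) x x" .
qed

lemma bil_add1: "bil Q (a + b) c = bil Q a c + bil Q b c"
  by (simp add: bil_def algebra_simps sum.distrib)
lemma bil_add2: "bil Q a (b + c) = bil Q a b + bil Q a c"
  by (simp add: bil_def algebra_simps sum.distrib)
lemma bil_sm1: "bil Q (s *s a) c = s * bil Q a c"
  by (simp add: bil_def sum_distrib_left mult_ac)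
lemma bil_sm2: "bil Q a (s *s c) = s * bil Q a c"
  by (simp add: bil_def sum_distrib_left mult_ac)
lemma bil_swap: assumes "symQ Q" shows "bil Q a b = bil Q b a"
proof -
  have "bil Q b a = (\<Sum>j\<in>UNIV. \<Sum>i\<in>UNIV. Q i j * b$i * a$j)"
    unfolding bil_def by (rule sum.swap)
  also have "\<dots> = bil Q a b" unfolding bil_def using assms unfolding symQ_def
    by (intro sum.cong refl) (metis mult.commute mult.left_commute)
  finally show ?thesis by simp
qed

lemma bil_upd:
  assumes "symQ Q"
  shows "bil Q (x + s *s e) (x + s *s e) = bil Q x x + 2 * bil Q e x * s + bil Q e e * s^2 + 0 * s^3"
proof -
  have sw: "bil Q x e = bil Q e x" using bil_swap[OF assms(1)] by metis
  show ?thesis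
    apply (simp only: bil_add1 bil_add2 bil_sm1 bil_sm2 sw)
    apply (simp add: power2_eq_square algebra_simps)
    done
qed

lemma linf_upd:
  shows "linf L (x + s *s ev l) = linf L x + L l * s + 0 * s^2 + 0 * s^3"
proof -
  have "linf L (x + s *s ev l) = linf L x + s * linf L (ev l)"
    by (simp add: linf_def algebra_simps sum.distrib sum_distrib_left)
  moreover have "linf L (ev l) = L l"
  proof -
    have "linf L (ev l) = (\<Sum>i\<in>UNIV. if i = l then L l else 0)"
      unfolding linf_def ev_def by (intro sum.cong refl) auto
    then show ?thesis by simp
  qed
  ultimately show ?thesis by simp
qed

lemma bil_ev: "bil Q (ev l) x = linf (Q l) x"
proof -
  have "bil Q (ev l) x = (\<Sum>i\<in>UNIV. if i = l then (\<Sum>j\<in>UNIV. Q l j * x$j) else 0)"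
    unfolding bil_def ev_def by (intro sum.cong refl) auto
  then show ?thesis by (simp add: linf_def)
qed

lemma pd_bil:
  assumes "symQ Q" "\<And>x. f x = bil Q x x"
  shows "pd l f = (\<lambda>x. linf (\<lambda>k. 2 * Q l k) x)"
proof
  fix x
  have "(\<lambda>t. f (\<chi> j. if j = l then t else x$j)) =
    (\<lambda>t. bil Q x x + (2 * bil Q (ev l) x) * (t - x$l) + (bil Q (ev l) (ev l)) * (t - x$l)^2
       + 0 * (t - x$l)^3)"
    by (simp only: assms(2) upd_eq bil_upd[OF assms(1)])
  then have "pd l f x = 2 * bil Q (ev l) x"
    unfolding pd_def by (simp only: deriv_cubic)
  also have "\<dots> = linf (\<lambda>k. 2 * Q l k) x"
    by (simp add: bil_ev linf_def sum_distrib_left mult_ac)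
  finally show "pd l f x = linf (\<lambda>k. 2 * Q l k) x" .
qed

lemma linf_ev: "linf L (ev l) = L l"
proof -
  have "linf L (ev l) = (\<Sum>i\<in>UNIV. if i = l then L l else 0)"
    unfolding linf_def ev_def by (intro sum.cong refl) auto
  then show ?thesis by simp
qed

lemma pd_linf:
  assumes "\<And>x. f x = linf L x"
  shows "pd l f = (\<lambda>x. L l)"
proof
  fix x
  have "(\<lambda>t. f (\<chi> j. if j = l then t else x$j)) =
    (\<lambda>t. linf L x + (L l) * (t - x$l) + 0 * (t - x$l)^2 + 0 * (t - x$l)^3)"
    by (simp only: assms upd_eq linf_upd)
  then show "pd l f x = L l"
    unfolding pd_def by (simp only: deriv_cubic)
qed

definition Tx :: "(3\<Rightarrow>3\<Rightarrow>3\<Rightarrow>complex) \<Rightarrow> complex^3 \<Rightarrow> mat" where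
  "Tx T x = (\<lambda>i j. linf (\<lambda>k. T i j k) x)"
definition msc :: "complex \<Rightarrow> mat \<Rightarrow> mat" where "msc c X = (\<lambda>i j. c * X i j)"
definition madd :: "mat \<Rightarrow> mat \<Rightarrow> mat" where "madd X Y = (\<lambda>i j. X i j + Y i j)"

lemma Hm_tri:
  assumes "symT T" "\<And>x. f x = tri T x x x"
  shows "Hm f x = msc 6 (Tx T x)"
proof -
  have s: "symQ (\<lambda>j k. 3 * T l j k)" for l using assms(1) unfolding symT_def symQ_def by metis
  have "pd i (pd j f) = (\<lambda>x. linf (\<lambda>k. 2 * (3 * T j i k)) x)" for i j
    by (rule pd_bil[OF s]) (simp add: pd_tri[OF assms])
  then show ?thesis unfolding Hm_def msc_def Tx_def linf_def using assms(1) unfolding symT_def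
    by (auto simp: fun_eq_iff sum_distrib_left mult_ac)
qed

lemma Hm_bil:
  assumes "symQ Q" "\<And>x. f x = bil Q x x"
  shows "Hm f x = msc 2 Q"
proof -
  have "pd i (pd j f) = (\<lambda>x. 2 * Q j i)" for i j
    by (rule pd_linf) (simp add: pd_bil[OF assms])
  then show ?thesis unfolding Hm_def msc_def using assms(1) unfolding symQ_def by auto
qed

definition out :: "complex^3 \<Rightarrow> complex^3 \<Rightarrow> mat" where "out a b = (\<lambda>i j. a$i * b$j)"
definition det3 :: "complex^3 \<Rightarrow> complex^3 \<Rightarrow> complex^3 \<Rightarrow> complex" where
  "det3 a b c = alt3 (\<lambda>i j k. a$i * b$j * c$k)"

lemma Dm_add1: "Dm (madd X Y) B C = Dm X B C + Dm Y B C" by (simp add: Dm_alt alt3_def madd_def algebra_simps)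
lemma Dm_add2: "Dm A (madd X Y) C = Dm A X C + Dm A Y C" by (simp add: Dm_alt alt3_def madd_def algebra_simps)
lemma Dm_add3: "Dm A B (madd X Y) = Dm A B X + Dm A B Y" by (simp add: Dm_alt alt3_def madd_def algebra_simps)
lemma Dm_sc1: "Dm (msc c X) B C = c * Dm X B C" by (simp add: Dm_alt alt3_def msc_def algebra_simps)
lemma Dm_sc2: "Dm A (msc c X) C = c * Dm A X C" by (simp add: Dm_alt alt3_def msc_def algebra_simps)
lemma Dm_sc3: "Dm A B (msc c X) = c * Dm A B X" by (simp add: Dm_alt alt3_def msc_def algebra_simps)
lemma Dm_out: "Dm (out a b) (out c d) (out e f) = det3 a c e * det3 b d f"
  by (simp add: Dm_alt alt3_def out_def det3_def algebra_simps)
lemma Dm_swap12: "Dm A B C = Dm B A C" by (simp add: Dm_alt alt3_def algebra_simps)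
lemma Dm_det: "Dm A A A = 6 * det (\<chi> i j. A i j)" by (simp add: Dm_alt alt3_def det_3 algebra_simps)

lemma det3_aac: "det3 a a c = 0" by (simp add: det3_def alt3_def algebra_simps)
lemma det3_aca: "det3 a c a = 0" by (simp add: det3_def alt3_def algebra_simps)
lemma det3_caa: "det3 c a a = 0" by (simp add: det3_def alt3_def algebra_simps)
lemma det3_swap12: "det3 b a c = - det3 a b c" by (simp add: det3_def alt3_def algebra_simps)

lemma lin_sq: "(lin u y)^2 = bil (out u u) y y"
  by (simp add: lin_def bil_def out_def power2_eq_square sum_distrib_left sum_distrib_right mult_ac)

lemma symQ_out: "symQ (out u u)" by (simp add: symQ_def out_def mult.commute)

lemma Hessian_tri:
  assumes "symT T" "\<And>x. f x = tri T x x x"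
  shows "Hessian f x = 18 * Dm (Tx T x) (Tx T x) (Tx T x)"
  unfolding Hessian_def J2 Hm_tri[OF assms] by (simp add: Dm_sc1 Dm_sc2 Dm_sc3)

lemma Hm_sq: "Hm (\<lambda>y. (lin u y)^2) x = msc 2 (out u u)"
  by (rule Hm_bil[OF symQ_out]) (simp add: lin_sq)

lemma theta_tri:
  assumes "symT T" "\<And>x. f x = tri T x x x"
  shows "theta f u x = 18 * Dm (Tx T x) (Tx T x) (out u u)"
  unfolding theta_def J2 Hm_tri[OF assms] Hm_sq by (simp add: Dm_sc1 Dm_sc2 Dm_sc3)

definition Tk :: "(3\<Rightarrow>3\<Rightarrow>3\<Rightarrow>complex) \<Rightarrow> 3 \<Rightarrow> mat" where "Tk T k = (\<lambda>i j. T i j k)"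

lemma Tx_split: "Tx T x = madd (msc (x$1) (Tk T 1)) (madd (msc (x$2) (Tk T 2)) (msc (x$3) (Tk T 3)))"
  by (simp add: Tx_def linf_def sum_3 madd_def msc_def Tk_def fun_eq_iff mult_ac)

lemma Dm_Tx: "Dm (Tx T x) (Tx T x) U = bil (\<lambda>k l. Dm (Tk T k) (Tk T l) U) x x"
  by (simp add: Tx_split Dm_add1 Dm_add2 Dm_sc1 Dm_sc2 bil_def sum_3 algebra_simps)

definition MM :: "(3\<Rightarrow>3\<Rightarrow>3\<Rightarrow>complex) \<Rightarrow> complex^3 \<Rightarrow> mat" where
  "MM T u = (\<lambda>k l. Dm (Tk T k) (Tk T l) (out u u))"

lemma theta_bil:
  assumes "symT T" "\<And>x. f x = tri T x x x"
  shows "theta f u = (\<lambda>x. bil (\<lambda>k l. 18 * MM T u k l) x x)"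
  by (rule ext) (simp add: theta_tri[OF assms] Dm_Tx MM_def bil_def sum_distrib_left mult_ac)

lemma F6u_tri:
  assumes "symT T" "\<And>x. f x = tri T x x x"
  shows "F6u f u x = 27/32 * Dm (MM T u) (MM T u) (out u u)"
proof -
  have s: "symQ (\<lambda>k l. 18 * MM T u k l)"
    unfolding symQ_def MM_def using Dm_swap12 by metis
  have h: "Hm (theta f u) x = msc 36 (MM T u)"
    by (subst Hm_bil[OF s theta_bil[OF assms, THEN fun_cong]]) (simp add: msc_def)
  show ?thesis
    unfolding F6u_def J2 h Hm_sq by (simp add: Dm_sc1 Dm_sc2 Dm_sc3)
qed

definition cone :: "complex \<Rightarrow> complex \<Rightarrow> complex \<Rightarrow> complex \<Rightarrow> complex^3 \<Rightarrow> complex^3 \<Rightarrow> (3\<Rightarrow>3\<Rightarrow>3\<Rightarrow>complex)" where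
 "cone g0 g1 g2 g3 a b = (\<lambda>i j k. g0 * (a$i*a$j*a$k) + g1/3 * (a$i*a$j*b$k + a$i*b$j*a$k + b$i*a$j*a$k)
     + g2/3 * (a$i*b$j*b$k + b$i*a$j*b$k + b$i*b$j*a$k) + g3 * (b$i*b$j*b$k))"

lemma symT_cone: "symT (cone g0 g1 g2 g3 a b)"
  unfolding symT_def cone_def by (intro allI conjI) (simp_all add: algebra_simps add.left_commute)

definition tout :: "complex^3 \<Rightarrow> complex^3 \<Rightarrow> complex^3 \<Rightarrow> (3\<Rightarrow>3\<Rightarrow>3\<Rightarrow>complex)" where
  "tout a b c = (\<lambda>i j k. a$i*b$j*c$k)"
definition tadd :: "(3\<Rightarrow>3\<Rightarrow>3\<Rightarrow>complex) \<Rightarrow> (3\<Rightarrow>3\<Rightarrow>3\<Rightarrow>complex) \<Rightarrow> (3\<Rightarrow>3\<Rightarrow>3\<Rightarrow>complex)" where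
  "tadd S T = (\<lambda>i j k. S i j k + T i j k)"
definition tsc :: "complex \<Rightarrow> (3\<Rightarrow>3\<Rightarrow>3\<Rightarrow>complex) \<Rightarrow> (3\<Rightarrow>3\<Rightarrow>3\<Rightarrow>complex)" where
  "tsc c T = (\<lambda>i j k. c * T i j k)"

lemma cone_split: "cone g0 g1 g2 g3 a b = tadd (tsc g0 (tout a a a))
   (tadd (tsc (g1/3) (tadd (tout a a b) (tadd (tout a b a) (tout b a a))))
   (tadd (tsc (g2/3) (tadd (tout a b b) (tadd (tout b a b) (tout b b a)))) (tsc g3 (tout b b b))))"
  by (simp add: cone_def tadd_def tsc_def tout_def fun_eq_iff add.assoc)

lemma tri_tadd: "tri (tadd S T) x y z = tri S x y z + tri T x y z"
  by (simp add: tri_def tadd_def algebra_simps sum.distrib)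
lemma tri_tsc: "tri (tsc c T) x y z = c * tri T x y z"
  by (simp add: tri_def tsc_def sum_distrib_left mult_ac)
lemma tri_tout: "tri (tout a b c) x y z = lin a x * lin b y * lin c z"
  by (simp add: tri_def tout_def lin_def sum_3 algebra_simps)

lemma tri_cone: "tri (cone g0 g1 g2 g3 a b) x x x =
   g0*(lin a x)^3 + g1*(lin a x)^2*lin b x + g2*lin a x*(lin b x)^2 + g3*(lin b x)^3"
  by (simp add: cone_split tri_tadd tri_tsc tri_tout power2_eq_square power3_eq_cube algebra_simps)

lemma Tx_tadd: "Tx (tadd S T) x = madd (Tx S x) (Tx T x)"
  by (simp add: Tx_def tadd_def madd_def linf_def algebra_simps sum.distrib)
lemma Tx_tsc: "Tx (tsc c T) x = msc c (Tx T x)"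
  by (simp add: Tx_def tsc_def msc_def linf_def sum_distrib_left mult_ac)
lemma Tx_tout: "Tx (tout a b c) x = msc (lin c x) (out a b)"
  by (simp add: Tx_def tout_def msc_def out_def linf_def lin_def sum_distrib_left mult_ac)
lemma Tk_tadd: "Tk (tadd S T) k = madd (Tk S k) (Tk T k)"
  by (simp add: Tk_def tadd_def madd_def)
lemma Tk_tsc: "Tk (tsc c T) k = msc c (Tk T k)"
  by (simp add: Tk_def tsc_def msc_def)
lemma Tk_tout: "Tk (tout a b c) k = msc (c$k) (out a b)"
  by (simp add: Tk_def tout_def msc_def out_def mult_ac)

definition Em :: "complex^3 \<Rightarrow> complex^3 \<Rightarrow> complex \<Rightarrow> complex \<Rightarrow> complex \<Rightarrow> mat" where
  "Em a b p q r = madd (msc p (out a a)) (madd (msc q (out a b)) (madd (msc q (out b a)) (msc r (out b b))))"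

lemma Em_eq: "Em a b p q r = (\<lambda>i j. p * (a$i*a$j) + q * (a$i*b$j + b$i*a$j) + r * (b$i*b$j))"
  by (simp add: Em_def madd_def msc_def out_def fun_eq_iff algebra_simps)

lemma msc_eq: "msc c X = (\<lambda>i j. c * X i j)" by (simp add: msc_def)
lemma madd_eq: "madd X Y = (\<lambda>i j. X i j + Y i j)" by (simp add: madd_def)
lemma out_eq: "out a b = (\<lambda>i j. a$i * b$j)" by (simp add: out_def)

lemma Tx_cone: "Tx (cone g0 g1 g2 g3 a b) x = Em a b (g0 * lin a x + g1/3 * lin b x)
     (g1/3 * lin a x + g2/3 * lin b x) (g2/3 * lin a x + g3 * lin b x)"
  unfolding cone_split Tx_tadd Tx_tsc Tx_tout Em_eq madd_eq msc_eq out_eq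
  by (simp add: fun_eq_iff algebra_simps)

lemma Tk_cone: "Tk (cone g0 g1 g2 g3 a b) k = Em a b (g0 * a$k + g1/3 * b$k)
     (g1/3 * a$k + g2/3 * b$k) (g2/3 * a$k + g3 * b$k)"
  unfolding cone_split Tk_tadd Tk_tsc Tk_tout Em_eq madd_eq msc_eq out_eq
  by (simp add: fun_eq_iff algebra_simps)

lemma Dm_Em3: "Dm (Em a b p1 q1 r1) (Em a b p2 q2 r2) (Em a b p3 q3 r3) = 0"
  unfolding Em_def
  by (simp add: Dm_add1 Dm_add2 Dm_add3 Dm_sc1 Dm_sc2 Dm_sc3 Dm_out det3_aac det3_aca det3_caa)

lemma Dm_Em2: "Dm (Em a b p1 q1 r1) (Em a b p2 q2 r2) (out u u) = (det3 a b u)^2 * (p1*r2 + r1*p2 - 2*q1*q2)"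
proof -
  have s: "det3 b a u = - det3 a b u" by (rule det3_swap12)
  show ?thesis unfolding Em_def
    by (simp add: Dm_add1 Dm_add2 Dm_add3 Dm_sc1 Dm_sc2 Dm_sc3 Dm_out det3_aac det3_aca det3_caa s
        power2_eq_square algebra_simps)
qed

definition disc :: "complex \<Rightarrow> complex \<Rightarrow> complex \<Rightarrow> complex \<Rightarrow> complex" where
  "disc g0 g1 g2 g3 = g1^2*g2^2 - 4*g0*g2^3 - 4*g1^3*g3 - 27*g0^2*g3^2 + 18*g0*g1*g2*g3"

lemma Hessian_cone:
  assumes "\<And>x. f x = tri (cone g0 g1 g2 g3 a b) x x x"
  shows "Hessian f x = 0"
  unfolding Hessian_tri[OF symT_cone assms] Tx_cone Dm_Em3 by simp

lemma F6u_cone: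
  assumes "\<And>x. f x = tri (cone g0 g1 g2 g3 a b) x x x"
  shows "F6u f u x = (det3 a b u)^6 * disc g0 g1 g2 g3 / 16"
proof -
  let ?d = "(det3 a b u)^2"
  have mm: "MM (cone g0 g1 g2 g3 a b) u = Em a b (?d * (2*g0*(g2/3) - 2*(g1/3)^2)) (?d * (g0*g3 - (g1/3)*(g2/3)))
      (?d * (2*(g1/3)*g3 - 2*(g2/3)^2))"
    apply (unfold MM_def Tk_cone Dm_Em2)
    apply (unfold Em_eq)
    apply (simp add: fun_eq_iff power2_eq_square algebra_simps)
    done
  show ?thesis
    unfolding F6u_tri[OF symT_cone assms] mm Dm_Em2 disc_def
    by (simp add: eval_nat_numeral power_Suc algebra_simps)
qed

lemma lin_add: "lin (a + b) x = lin a x + lin b x"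
  by (simp add: lin_def algebra_simps sum.distrib)
lemma lin_sm: "lin (c *s a) x = c * lin a x"
  by (simp add: lin_def sum_distrib_left mult_ac)
lemma lin_diff: "lin (a - b) x = lin a x - lin b x"
  by (simp add: lin_def algebra_simps sum_subtractf)
lemma lin_ev: "lin a (ev i) = a$i"
proof -
  have "lin a (ev i) = (\<Sum>j\<in>UNIV. if j = i then a$i else 0)"
    unfolding lin_def ev_def by (intro sum.cong refl) auto
  then show ?thesis by simp
qed
lemma lin_zero: "(\<forall>x. lin v x = 0) \<longleftrightarrow> v = 0"
proof
  assume "\<forall>x. lin v x = 0"
  then have "v$i = 0" for i using lin_ev[of v i] by simp
  then show "v = 0" by (simp add: vec_eq_iff)
qed (simp add: lin_def)

lemma lin_comb: "\<mu> * lin a x + \<nu> * lin b x = lin (\<mu> *s a + \<nu> *s b) x"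
  by (simp add: lin_add lin_sm)

lemma lin_indep2_vec: "lin_indep2 a b \<longleftrightarrow> (\<forall>\<mu> \<nu>. \<mu> *s a + \<nu> *s b = 0 \<longrightarrow> \<mu> = 0 \<and> \<nu> = 0)"
  unfolding lin_indep2_def lin_comb lin_zero ..

lemma comb_indep:
  assumes "lin_indep2 a b" "p1*q2 - p2*q1 \<noteq> 0"
  shows "lin_indep2 (p1 *s a + q1 *s b) (p2 *s a + q2 *s b)"
  unfolding lin_indep2_vec
proof (intro allI impI)
  fix \<mu> \<nu> assume h: "\<mu> *s (p1 *s a + q1 *s b) + \<nu> *s (p2 *s a + q2 *s b) = 0"
  have "(\<mu>*p1 + \<nu>*p2) *s a + (\<mu>*q1 + \<nu>*q2) *s b = \<mu> *s (p1 *s a + q1 *s b) + \<nu> *s (p2 *s a + q2 *s b)"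
    by (simp add: vec_eq_iff algebra_simps)
  with h have "(\<mu>*p1 + \<nu>*p2) *s a + (\<mu>*q1 + \<nu>*q2) *s b = 0" by simp
  with assms(1) have e: "\<mu>*p1 + \<nu>*p2 = 0" "\<mu>*q1 + \<nu>*q2 = 0" unfolding lin_indep2_vec by blast+
  have "\<mu> * (p1*q2 - p2*q1) = q2*(\<mu>*p1 + \<nu>*p2) - p2*(\<mu>*q1 + \<nu>*q2)" by (simp add: algebra_simps)
  also have "\<dots> = 0" using e by simp
  finally have m: "\<mu> = 0" using assms(2) by simp
  have "\<nu> * (p1*q2 - p2*q1) = p1*(\<mu>*q1 + \<nu>*q2) - q1*(\<mu>*p1 + \<nu>*p2)" by (simp add: algebra_simps)
  also have "\<dots> = 0" using e by simp
  finally have n: "\<nu> = 0" using assms(2) by simp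
  show "\<mu> = 0 \<and> \<nu> = 0" using m n by simp
qed

definition om :: complex where "om = (-1 + \<i> * of_real (sqrt 3)) / 2"

lemma om_eq: "om^2 + om + 1 = 0"
proof -
  have s: "(of_real (sqrt 3) :: complex) * of_real (sqrt 3) = 3"
    by (simp flip: of_real_mult)
  show ?thesis unfolding om_def power2_eq_square
    by (simp add: field_simps s)
qed

lemma om3: "om^3 = 1"
proof -
  have "om^3 - 1 = (om - 1) * (om^2 + om + 1)" by (simp add: algebra_simps power2_eq_square power3_eq_cube)
  then show ?thesis using om_eq by simp
qed

lemma om_ne: "om \<noteq> 1" "om \<noteq> 0" "om^2 \<noteq> om" "om^2 \<noteq> 1"
proof -
  show "om \<noteq> 1" using om_eq by auto
  show "om \<noteq> 0" using om_eq by auto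
  show "om^2 \<noteq> om"
  proof
    assume "om^2 = om" then have "om * (om - 1) = 0" by (simp add: algebra_simps power2_eq_square)
    then show False using \<open>om \<noteq> 1\<close> \<open>om \<noteq> 0\<close> by simp
  qed
  show "om^2 \<noteq> 1"
  proof
    assume "om^2 = 1" then have "om^3 = om" by (simp add: power3_eq_cube power2_eq_square)
    then show False using om3 \<open>om \<noteq> 1\<close> by simp
  qed
qed

lemma cube_root: "\<exists>r::complex. r^3 = a"
proof (cases "a = 0")
  case False
  have "exp (Ln a / of_nat 3) ^ 3 = exp (Ln a)" by (rule exp_divide_power_eq) simp
  then show ?thesis using False by (intro exI[of _ "exp (Ln a / 3)"]) simp
qed simp

lemma two_to_three:
  assumes "a0 \<noteq> 0" "b0 \<noteq> 0" "lin_indep2 a b"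
  shows "\<exists>a' b' c'. lin_dep3 a' b' c' \<and> lin_indep2 a' b' \<and> lin_indep2 a' c' \<and> lin_indep2 b' c' \<and>
     (\<lambda>x. a0 * (lin a x)^3 + b0 * (lin b x)^3) = (\<lambda>x. lin a' x * lin b' x * lin c' x)"
proof -
  obtain \<alpha> where al: "\<alpha>^3 = a0" using cube_root by blast
  obtain \<beta> where be: "\<beta>^3 = b0" using cube_root by blast
  have an: "\<alpha> \<noteq> 0" using al assms(1) by auto
  have bn: "\<beta> \<noteq> 0" using be assms(2) by auto
  define a' where "a' = \<alpha> *s a + \<beta> *s b"
  define b' where "b' = \<alpha> *s a + (om * \<beta>) *s b"
  define c' where "c' = \<alpha> *s a + (om^2 * \<beta>) *s b"
  have o2: "om^2 = - om - 1" using om_eq by (simp add: algebra_simps eq_neg_iff_add_eq_0)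
  have o3: "om^3 = 1" by (rule om3)
  have d1: "\<alpha> * (om * \<beta>) - \<alpha> * \<beta> \<noteq> 0"
  proof -
    have "\<alpha> * (om * \<beta>) - \<alpha> * \<beta> = \<alpha> * \<beta> * (om - 1)" by (simp add: algebra_simps)
    then show ?thesis using an bn om_ne by simp
  qed
  have d2: "\<alpha> * (om^2 * \<beta>) - \<alpha> * \<beta> \<noteq> 0"
  proof -
    have "\<alpha> * (om^2 * \<beta>) - \<alpha> * \<beta> = \<alpha> * \<beta> * (om^2 - 1)" by (simp add: algebra_simps)
    then show ?thesis using an bn om_ne by simp
  qed
  have d3: "\<alpha> * (om^2 * \<beta>) - \<alpha> * (om * \<beta>) \<noteq> 0"
  proof -
    have "\<alpha> * (om^2 * \<beta>) - \<alpha> * (om * \<beta>) = \<alpha> * \<beta> * (om^2 - om)" by (simp add: algebra_simps)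
    then show ?thesis using an bn om_ne by simp
  qed
  have i1: "lin_indep2 a' b'" unfolding a'_def b'_def using comb_indep[OF assms(3) d1] by simp
  have i2: "lin_indep2 a' c'" unfolding a'_def c'_def using comb_indep[OF assms(3) d2] by simp
  have i3: "lin_indep2 b' c'" unfolding b'_def c'_def using comb_indep[OF assms(3) d3] by simp
  have dep: "lin_dep3 a' b' c'"
    unfolding lin_dep3_def
  proof (intro exI conjI allI)
    show "(1::complex, om, om^2) \<noteq> (0, 0, 0)" by simp
    fix x
    have "1 * lin a' x + om * lin b' x + om^2 * lin c' x =
       (1 + om + om^2) * \<alpha> * lin a x + (1 + om^2 + om^3 * om) * \<beta> * lin b x"
      unfolding a'_def b'_def c'_def lin_add lin_sm by (simp add: algebra_simps power2_eq_square power3_eq_cube)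
    also have "\<dots> = 0" using om_eq o3 by (simp add: algebra_simps)
    finally show "1 * lin a' x + om * lin b' x + om^2 * lin c' x = 0" .
  qed
  have eq: "a0 * (lin a x)^3 + b0 * (lin b x)^3 = lin a' x * lin b' x * lin c' x" for x
  proof -
    have "lin a' x * lin b' x * lin c' x =
      (\<alpha> * lin a x + \<beta> * lin b x) * (\<alpha> * lin a x + om * \<beta> * lin b x) * (\<alpha> * lin a x + om^2 * \<beta> * lin b x)"
      unfolding a'_def b'_def c'_def lin_add lin_sm by (simp add: mult_ac)
    also have "\<dots> = \<alpha>^3 * (lin a x)^3 + (1 + om + om^2) * \<alpha>^2 * \<beta> * (lin a x)^2 * lin b x
        + (om + om^2 + om^3) * \<alpha> * \<beta>^2 * lin a x * (lin b x)^2 + om^3 * \<beta>^3 * (lin b x)^3"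
      by (simp add: algebra_simps power2_eq_square power3_eq_cube)
    also have "\<dots> = a0 * (lin a x)^3 + b0 * (lin b x)^3"
      using om_eq o3 al be by (simp add: algebra_simps)
    finally show ?thesis by simp
  qed
  show ?thesis using dep i1 i2 i3 eq by blast
qed

lemma three_to_two:
  assumes "lin_dep3 a b c" "lin_indep2 a b" "lin_indep2 a c" "lin_indep2 b c"
  shows "\<exists>a0 b0 a' b'. a0 \<noteq> 0 \<and> b0 \<noteq> 0 \<and> lin_indep2 a' b' \<and>
     (\<lambda>x. lin a x * lin b x * lin c x) = (\<lambda>x. a0 * (lin a' x)^3 + b0 * (lin b' x)^3)"
proof -
  obtain \<alpha> \<beta> \<gamma> where ne: "(\<alpha>,\<beta>,\<gamma>) \<noteq> (0,0,0)" and h: "\<And>x. \<alpha> * lin a x + \<beta> * lin b x + \<gamma> * lin c x = 0"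
    using assms(1) unfolding lin_dep3_def by blast
  have gn: "\<gamma> \<noteq> 0"
  proof
    assume "\<gamma> = 0"
    then have "\<forall>x. \<alpha> * lin a x + \<beta> * lin b x = 0" using h by simp
    then have "\<alpha> = 0 \<and> \<beta> = 0" using assms(2) unfolding lin_indep2_def by blast
    then show False using ne \<open>\<gamma> = 0\<close> by simp
  qed
  define p where "p = -\<alpha>/\<gamma>"
  define q where "q = -\<beta>/\<gamma>"
  have cx: "lin c x = p * lin a x + q * lin b x" for x
  proof -
    have "\<gamma> * lin c x = - \<alpha> * lin a x - \<beta> * lin b x" using h[of x] by (simp add: algebra_simps eq_neg_iff_add_eq_0)
    then show ?thesis using gn unfolding p_def q_def by (simp add: field_simps)
  qed
  have pn: "p \<noteq> 0"
  proof
    assume "p = 0"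
    then have "\<forall>x. q * lin b x + (-1) * lin c x = 0" using cx by simp
    then have "q = 0 \<and> (-1::complex) = 0" using assms(4) unfolding lin_indep2_def by blast
    then show False by simp
  qed
  have qn: "q \<noteq> 0"
  proof
    assume "q = 0"
    then have "\<forall>x. p * lin a x + (-1) * lin c x = 0" using cx by simp
    then have "p = 0 \<and> (-1::complex) = 0" using assms(3) unfolding lin_indep2_def by blast
    then show False by simp
  qed
  have o3: "om^3 = 1" by (rule om3)
  have o4: "om^4 = om"
  proof -
    have "om^4 = om^3 * om" by (simp add: eval_nat_numeral)
    then show ?thesis using o3 by simp
  qed
  have o6: "om^6 = 1"
  proof -
    have "om^6 = om^3 * om^3" by (simp add: eval_nat_numeral)
    then show ?thesis using o3 by simp
  qed
  have dn: "om^2 - om \<noteq> 0" using om_ne by simp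
  define a0 where "a0 = 1 / (3 * (om^2 - om) * p * q)"
  define a' where "a' = p *s a + (-(om*q)) *s b"
  define b' where "b' = p *s a + (-(om^2*q)) *s b"
  have a0n: "a0 \<noteq> 0" unfolding a0_def using dn pn qn by simp
  have ind: "lin_indep2 a' b'"
  proof -
    have "p * (-(om^2*q)) - p * (-(om*q)) = p * q * (om - om^2)" by (simp add: algebra_simps)
    moreover have "om - om^2 \<noteq> 0" using om_ne by simp
    ultimately have "p * (-(om^2*q)) - p * (-(om*q)) \<noteq> 0" using pn qn by simp
    then show ?thesis unfolding a'_def b'_def by (rule comb_indep[OF assms(2)])
  qed
  have eq: "lin a x * lin b x * lin c x = a0 * (lin a' x)^3 + (-a0) * (lin b' x)^3" for x
  proof -
    define X where "X = p * lin a x"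
    define Y where "Y = q * lin b x"
    have la: "lin a' x = X - om * Y" unfolding a'_def X_def Y_def lin_add lin_sm by (simp add: algebra_simps)
    have lb: "lin b' x = X - om^2 * Y" unfolding b'_def X_def Y_def lin_add lin_sm by (simp add: algebra_simps)
    have "(X - om*Y)^3 - (X - om^2*Y)^3 = 3*(om^2 - om)*X^2*Y + 3*(om^2 - om^4)*X*Y^2 + (om^6 - om^3)*Y^3"
      by (simp add: algebra_simps power2_eq_square power3_eq_cube eval_nat_numeral)
    also have "\<dots> = 3*(om^2 - om) * X * Y * (X + Y)" using o3 o4 o6 by (simp add: algebra_simps power2_eq_square)
    finally have k: "(X - om*Y)^3 - (X - om^2*Y)^3 = 3*(om^2 - om) * X * Y * (X + Y)" .
    have "a0 * (lin a' x)^3 + (-a0) * (lin b' x)^3 = a0 * (3*(om^2 - om) * X * Y * (X + Y))"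
      unfolding la lb k[symmetric] by (simp add: algebra_simps)
    also have "\<dots> = lin a x * lin b x * (p * lin a x + q * lin b x)"
      unfolding a0_def X_def Y_def using dn pn qn by (simp add: field_simps)
    finally show ?thesis using cx by simp
  qed
  show ?thesis
    by (intro exI[of _ a0] exI[of _ "-a0"] exI[of _ a'] exI[of _ b']) (use a0n ind eq in auto)
qed

lemma det3_indep:
  assumes "det3 a b u \<noteq> 0" shows "lin_indep2 a b"
  unfolding lin_indep2_vec
proof (intro allI impI)
  fix \<mu> \<nu> assume h: "\<mu> *s a + \<nu> *s b = 0"
  have "\<mu> * det3 a b u = det3 (\<mu> *s a + \<nu> *s b) b u" by (simp add: det3_def alt3_def algebra_simps)
  also have "\<dots> = 0" using h by (simp add: det3_def alt3_def)
  finally have m: "\<mu> = 0" using assms by simp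
  have "\<nu> * det3 a b u = det3 a (\<mu> *s a + \<nu> *s b) u" by (simp add: det3_def alt3_def algebra_simps)
  also have "\<dots> = 0" using h by (simp add: det3_def alt3_def)
  finally have n: "\<nu> = 0" using assms by simp
  show "\<mu> = 0 \<and> \<nu> = 0" using m n by simp
qed

lemma indep_det:
  assumes "lin_indep2 a b" shows "\<exists>u. det3 a b u \<noteq> 0"
proof (rule ccontr)
  assume "\<not> (\<exists>u. det3 a b u \<noteq> 0)"
  then have z: "det3 a b (ev 1) = 0" "det3 a b (ev 2) = 0" "det3 a b (ev 3) = 0" by auto
  have c1: "a$2 * b$3 - a$3 * b$2 = 0" using z(1) by (simp add: det3_def alt3_def ev_def algebra_simps)
  have c2: "a$3 * b$1 - a$1 * b$3 = 0" using z(2) by (simp add: det3_def alt3_def ev_def algebra_simps)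
  have c3: "a$1 * b$2 - a$2 * b$1 = 0" using z(3) by (simp add: det3_def alt3_def ev_def algebra_simps)
  have ind: "\<And>\<mu> \<nu>. \<mu> *s a + \<nu> *s b = 0 \<Longrightarrow> \<mu> = 0 \<and> \<nu> = 0" using assms unfolding lin_indep2_vec by blast
  show False
  proof (cases "a = 0")
    case True
    then have "(1::complex) *s a + 0 *s b = 0" by simp
    then show False using ind by fastforce
  next
    case False
    then obtain i where ai: "a$i \<noteq> 0" by (auto simp: vec_eq_iff)
    have "(b$i) *s a + (- a$i) *s b = 0"
      using exhaust_3[of i] c1 c2 c3
      by (auto simp: vec_eq_iff forall_3 algebra_simps)
    then show False using ind ai by fastforce
  qed
qed

lemma cubic_root_exists:
  assumes "c \<noteq> 0" shows "\<exists>r::complex. c*r^3 + g2*r + g3 = 0"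
proof -
  have "\<exists>z. poly [:g3, g2, 0, c:] z = 0"
    by (rule fundamental_theorem_of_algebra_alt) (use assms in auto)
  then obtain z where "poly [:g3, g2, 0, c:] z = 0" by blast
  then show ?thesis by (intro exI[of _ z]) (simp add: algebra_simps power3_eq_cube)
qed

lemma disc_roots:
  assumes "r1 + r2 + r3 = 0"
  shows "disc c 0 (c*(r1*r2+r1*r3+r2*r3)) (-c*r1*r2*r3) = c^4*(r1-r2)^2*(r1-r3)^2*(r2-r3)^2"
proof -
  have r3: "r3 = -r1-r2" using assms by (simp add: algebra_simps eq_neg_iff_add_eq_0)
  show ?thesis unfolding r3 disc_def by (simp add: algebra_simps power2_eq_square power3_eq_cube eval_nat_numeral)
qed

lemma binary_factor:
  assumes cn: "c \<noteq> 0" and ind: "lin_indep2 z n" and dn: "disc c 0 g2 g3 \<noteq> 0"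
    and f: "\<And>x. f x = c*(lin z x)^3 + g2 * lin z x * (lin n x)^2 + g3*(lin n x)^3"
  shows "\<exists>a b c'. lin_dep3 a b c' \<and> lin_indep2 a b \<and> lin_indep2 a c' \<and> lin_indep2 b c' \<and>
                 f = (\<lambda>x. lin a x * lin b x * lin c' x)"
proof -
  obtain r1 where r1: "c*r1^3 + g2*r1 + g3 = 0" using cubic_root_exists[OF cn] by blast
  define s where "s = csqrt (-3*r1^2 - 4*g2/c)"
  define r2 where "r2 = (-r1 + s)/2"
  define r3 where "r3 = (-r1 - s)/2"
  have ss: "s^2 = -3*r1^2 - 4*g2/c" unfolding s_def by simp
  have sum0: "r1 + r2 + r3 = 0" unfolding r2_def r3_def by (simp add: field_simps)
  have p23: "r2 * r3 = r1^2 + g2/c"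
  proof -
    have "r2 * r3 = (r1^2 - s^2)/4" unfolding r2_def r3_def by (simp add: field_simps power2_eq_square)
    also have "\<dots> = (r1^2 - (-3*r1^2 - 4*(g2/c)))/4" by (simp only: ss times_divide_eq_right)
    also have "\<dots> = (4*(r1^2 + g2/c))/4" by (simp only: algebra_simps) simp
    also have "\<dots> = r1^2 + g2/c" by simp
    finally show ?thesis .
  qed
  have g2e: "g2 = c*(r1*r2+r1*r3+r2*r3)"
  proof -
    have "r1*r2+r1*r3+r2*r3 = r1*(r2+r3) + r2*r3" by (simp add: algebra_simps)
    also have "\<dots> = r1*(-r1) + (r1^2 + g2/c)"
    proof -
      have "r2 + r3 = -r1" using sum0 by (simp add: algebra_simps eq_neg_iff_add_eq_0)
      then show ?thesis using p23 by simp
    qed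
    also have "\<dots> = g2/c" by (simp add: power2_eq_square)
    finally show ?thesis using cn by simp
  qed
  have g3e: "g3 = -c*r1*r2*r3"
  proof -
    have "-c*r1*r2*r3 = -c*r1*(r1^2 + g2/c)" using p23 by (simp add: mult.assoc)
    also have "\<dots> = -(c*r1^3 + g2*r1)" using cn by (simp add: field_simps power2_eq_square power3_eq_cube)
    also have "\<dots> = g3"
    proof -
      have "g3 = -(c*r1^3 + g2*r1)" using r1 by (metis add_eq_0_iff2 add.commute)
      then show ?thesis by simp
    qed
    finally show ?thesis by simp
  qed
  have "disc c 0 g2 g3 = c^4*(r1-r2)^2*(r1-r3)^2*(r2-r3)^2"
    unfolding g2e g3e by (rule disc_roots[OF sum0])
  with dn have d12: "r1 \<noteq> r2" and d13: "r1 \<noteq> r3" and d23: "r2 \<noteq> r3" by auto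
  define a' where "a' = c *s z + (-(c*r1)) *s n"
  define b' where "b' = 1 *s z + (-r2) *s n"
  define c' where "c' = 1 *s z + (-r3) *s n"
  have i1: "lin_indep2 a' b'" unfolding a'_def b'_def
    by (rule comb_indep[OF ind]) (use cn d12 in \<open>simp add: algebra_simps\<close>)
  have i2: "lin_indep2 a' c'" unfolding a'_def c'_def
    by (rule comb_indep[OF ind]) (use cn d13 in \<open>simp add: algebra_simps\<close>)
  have i3: "lin_indep2 b' c'" unfolding b'_def c'_def
    by (rule comb_indep[OF ind]) (use d23 in \<open>simp add: algebra_simps\<close>)
  have dep: "lin_dep3 a' b' c'"
    unfolding lin_dep3_def
  proof (intro exI conjI allI)
    show "((r2-r3)/c, r3 - r1, r1 - r2) \<noteq> (0, 0, 0)" using d12 by simp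
    fix x
    show "(r2-r3)/c * lin a' x + (r3 - r1) * lin b' x + (r1 - r2) * lin c' x = 0"
      unfolding a'_def b'_def c'_def lin_add lin_sm using cn by (simp add: field_simps)
  qed
  have eq: "f x = lin a' x * lin b' x * lin c' x" for x
  proof -
    have "lin a' x * lin b' x * lin c' x = c * (lin z x - r1 * lin n x) * (lin z x - r2 * lin n x) * (lin z x - r3 * lin n x)"
      unfolding a'_def b'_def c'_def lin_add lin_sm by (simp add: algebra_simps)
    also have "\<dots> = c*(lin z x)^3 - c*(r1+r2+r3)*(lin z x)^2 * lin n x + c*(r1*r2+r1*r3+r2*r3) * lin z x * (lin n x)^2
        - c*r1*r2*r3 * (lin n x)^3"
      by (simp add: algebra_simps power2_eq_square power3_eq_cube)
    also have "\<dots> = f x" unfolding f using sum0 g2e g3e by simp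
    finally show ?thesis by simp
  qed
  show ?thesis using dep i1 i2 i3 eq by blast
qed

definition dpoly :: "complex \<Rightarrow> complex \<Rightarrow> complex \<Rightarrow> complex \<Rightarrow> complex \<Rightarrow> complex \<Rightarrow> complex \<Rightarrow> complex \<Rightarrow> complex \<Rightarrow> complex \<Rightarrow> complex \<Rightarrow> complex" where
  "dpoly c q11 q12 q22 c1 c2 c3 c4 y1 y2 z =
    (let m11 = c1*y1 + c2*y2 + q11*z; m12 = c2*y1 + c3*y2 + q12*z; m13 = q11*y1 + q12*y2;
         m22 = c3*y1 + c4*y2 + q22*z; m23 = q12*y1 + q22*y2; m33 = c*z in
     m11*m22*m33 + m12*m23*m13 + m13*m12*m23 - m11*m23*m23 - m12*m12*m33 - m13*m22*m13)"

lemma dpoly_expand: "dpoly c q11 q12 q22 c1 c2 c3 c4 y1 y2 z =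
   ((-c1*q12^2 + 2*c2*q11*q12 - c3*q11^2)*y1^3 + (-2*c1*q12*q22 + 2*c2*q11*q22 + c2*q12^2 - c4*q11^2)*y1^2*y2
     + (-c1*q22^2 + 2*c3*q11*q22 + c3*q12^2 - 2*c4*q11*q12)*y1*y2^2 + (-c2*q22^2 + 2*c3*q12*q22 - c4*q12^2)*y2^3)
   + ((c*(c1*c3 - c2^2) + q11*q12^2 - q11^2*q22)*y1^2 + (c*(c1*c4 - c2*c3) - 2*q11*q12*q22 + 2*q12^3)*y1*y2
      + (c*(c2*c4 - c3^2) - q11*q22^2 + q12^2*q22)*y2^2) * z
   + (c*((c1*q22 - 2*c2*q12 + c3*q11)*y1 + (c2*q22 - 2*c3*q12 + c4*q11)*y2)) * z^2
   + (c*(q11*q22 - q12^2)) * z^3"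
  unfolding dpoly_def Let_def by (simp add: algebra_simps power2_eq_square power3_eq_cube)

lemma cubic_zero:
  assumes "\<And>z. A + B*z + C*z^2 + D*z^3 = (0::complex)"
  shows "B = 0" "C = 0" "D = 0"
proof -
  have e0: "A = 0" using assms[of 0] by simp
  have e1: "B + C + D = 0" using assms[of 1] e0 by simp
  have e2: "-B + C - D = 0" using assms[of "-1"] e0 by (simp add: power3_eq_cube)
  have e3: "B*2 + C*4 + D*8 = 0" using assms[of 2] e0 by (simp add: power3_eq_cube power2_eq_square)
  have "2*C = 0" using e1 e2 by (simp add: algebra_simps)
  then show cz: "C = 0" by simp
  have bd: "B = -D" using e1 cz by (simp add: eq_neg_iff_add_eq_0)
  have "6*D = 0" using e3 cz bd by (simp add: algebra_simps)
  then show dz: "D = 0" by simp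
  show "B = 0" using bd dz by simp
qed

lemma NF_alg:
  assumes cn: "c \<noteq> 0" and h: "\<And>y1 y2 z. dpoly c q11 q12 q22 c1 c2 c3 c4 y1 y2 z = 0"
  shows "\<exists>n1 n2 lam gam. q11 = lam*n1^2 \<and> q12 = lam*n1*n2 \<and> q22 = lam*n2^2 \<and>
            c1 = gam*n1^3 \<and> c2 = gam*n1^2*n2 \<and> c3 = gam*n1*n2^2 \<and> c4 = gam*n2^3"
proof -
  have K: "\<And>y1 y2. ((c*(c1*c3 - c2^2) + q11*q12^2 - q11^2*q22)*y1^2 + (c*(c1*c4 - c2*c3) - 2*q11*q12*q22 + 2*q12^3)*y1*y2
      + (c*(c2*c4 - c3^2) - q11*q22^2 + q12^2*q22)*y2^2) = 0 \<and>
      (c*((c1*q22 - 2*c2*q12 + c3*q11)*y1 + (c2*q22 - 2*c3*q12 + c4*q11)*y2)) = 0 \<and>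
      (c*(q11*q22 - q12^2)) = 0"
    using cubic_zero[OF h[unfolded dpoly_expand]] by blast
  have E1: "q11*q22 = q12^2" using K[of 0 0] cn by simp
  have E2a: "c1*q22 - 2*c2*q12 + c3*q11 = 0" using K[of 1 0] cn by simp
  have E2b: "c2*q22 - 2*c3*q12 + c4*q11 = 0" using K[of 0 1] cn by simp
  have k10: "c*(c1*c3 - c2^2) + q11*q12^2 - q11^2*q22 = 0" using K[of 1 0] by simp
  have k01: "c*(c2*c4 - c3^2) - q11*q22^2 + q12^2*q22 = 0" using K[of 0 1] by simp
  have k11: "c*(c1*c4 - c2*c3) - 2*q11*q12*q22 + 2*q12^3 = 0" using K[of 1 1] k10 k01 by simp
  have E3a: "c1*c3 = c2^2"
  proof -
    have "q11*q12^2 - q11^2*q22 = 0" using E1 by (simp add: power2_eq_square algebra_simps)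
    then show ?thesis using k10 cn by simp
  qed
  have E3c: "c2*c4 = c3^2"
  proof -
    have "- q11*q22^2 + q12^2*q22 = 0" using E1 by (simp add: power2_eq_square algebra_simps)
    then show ?thesis using k01 cn by (simp add: algebra_simps)
  qed
  have E3b: "c1*c4 = c2*c3"
  proof -
    have "- 2*q11*q12*q22 + 2*q12^3 = 0" using E1 by (simp add: power2_eq_square power3_eq_cube algebra_simps)
    then show ?thesis using k11 cn by (simp add: algebra_simps)
  qed
  show ?thesis
  proof (cases "q11 = 0")
    case False
    define t where "t = q12/q11"
    have q12e: "q12 = q11*t" unfolding t_def using False by simp
    have q22e: "q22 = q11*t^2"
    proof -
      have "q11*q22 = q11*(q11*t^2)" using E1 q12e by (simp add: power2_eq_square algebra_simps)
      then show ?thesis using False by simp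
    qed
    have c3e: "c3 = 2*c2*t - c1*t^2"
    proof -
      have "q11*(c1*t^2 - 2*c2*t + c3) = 0" using E2a q12e q22e by (simp add: algebra_simps power2_eq_square)
      then have z: "c1*t^2 - 2*c2*t + c3 = 0" using False by simp
      have "c3 = (c1*t^2 - 2*c2*t + c3) + 2*c2*t - c1*t^2" by (simp add: algebra_simps)
      then show ?thesis using z by simp
    qed
    have c2e: "c2 = c1*t"
    proof -
      have "(c2 - c1*t)^2 = 0" using E3a c3e by (simp add: algebra_simps power2_eq_square)
      then show ?thesis by simp
    qed
    have c3e': "c3 = c1*t^2" using c3e c2e by (simp add: algebra_simps power2_eq_square)
    have c4e: "c4 = c1*t^3"
    proof -
      have "q11*(c2*t^2 - 2*c3*t + c4) = 0" using E2b q12e q22e by (simp add: algebra_simps power2_eq_square)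
      then have z: "c2*t^2 - 2*c3*t + c4 = 0" using False by simp
      have "c4 = (c2*t^2 - 2*c3*t + c4) + 2*c3*t - c2*t^2" by (simp add: algebra_simps)
      then have "c4 = 2*c3*t - c2*t^2" using z by simp
      then show ?thesis using c2e c3e' by (simp add: algebra_simps power2_eq_square power3_eq_cube)
    qed
    show ?thesis
      by (rule exI[of _ 1], rule exI[of _ t], rule exI[of _ q11], rule exI[of _ c1])
         (simp add: q12e q22e c2e c3e' c4e algebra_simps power2_eq_square power3_eq_cube)
  next
    case q11: True
    have q12: "q12 = 0" using E1 q11 by simp
    show ?thesis
    proof (cases "q22 = 0")
      case False
      have c1: "c1 = 0" using E2a q11 q12 False by simp
      have c2: "c2 = 0" using E2b q11 q12 False by simp
      have c3: "c3 = 0" using E3c c2 by simp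
      show ?thesis
        by (rule exI[of _ 0], rule exI[of _ 1], rule exI[of _ q22], rule exI[of _ c4])
           (simp add: q11 q12 c1 c2 c3)
    next
      case q22: True
      show ?thesis
      proof (cases "c1 = 0")
        case False
        define t where "t = c2/c1"
        have c2e: "c2 = c1*t" unfolding t_def using False by simp
        have c3e: "c3 = c1*t^2"
        proof -
          have "c1*c3 = c1*(c1*t^2)" using E3a c2e by (simp add: power2_eq_square algebra_simps)
          then show ?thesis using False by simp
        qed
        have c4e: "c4 = c1*t^3"
        proof -
          have "c1*c4 = c1*(c1*t^3)" using E3b c2e c3e by (simp add: power2_eq_square power3_eq_cube algebra_simps)
          then show ?thesis using False by simp
        qed
        show ?thesis
          by (rule exI[of _ 1], rule exI[of _ t], rule exI[of _ 0], rule exI[of _ c1])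
             (simp add: q11 q12 q22 c2e c3e c4e algebra_simps power2_eq_square power3_eq_cube)
      next
        case c1: True
        have c2: "c2 = 0" using E3a c1 by simp
        have c3: "c3 = 0" using E3c c2 by simp
        show ?thesis
          by (rule exI[of _ 0], rule exI[of _ 1], rule exI[of _ 0], rule exI[of _ c4])
             (simp add: q11 q12 q22 c1 c2 c3)
      qed
    qed
  qed
qed

lemma tri_Tx: "tri T a b w = (\<Sum>k\<in>UNIV. \<Sum>l\<in>UNIV. a$k * b$l * Tx T w k l)"
  by (simp add: tri_def Tx_def linf_def sum_distrib_left mult_ac)

lemma det_congr:
  fixes bb :: "3 \<Rightarrow> complex^3"
  shows "det (\<chi> i j. tri T (bb i) (bb j) w) = det (\<chi> i j. bb j $ i) ^ 2 * det (\<chi> i j. Tx T w i j)"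
proof -
  let ?P = "\<chi> i j. bb j $ i" and ?M = "\<chi> i j. Tx T w i j"
  have "(\<chi> i j. tri T (bb i) (bb j) w) = transpose ?P ** ?M ** ?P"
    by (simp add: vec_eq_iff matrix_matrix_mult_def transpose_def tri_Tx sum_3 algebra_simps)
  then show ?thesis by (simp add: det_mul det_transpose power2_eq_square)
qed

lemma lin_vec3: "lin (\<chi> i. if i = 1 then a else if i = 2 then b else d) x = a*x$1 + b*x$2 + d*x$3"
  by (simp add: lin_def sum_3)

lemma normal_form:
  assumes sT: "symT T" and p3: "p$3 \<noteq> 0" and cn: "tri T p p p \<noteq> 0"
    and hd: "\<And>x. det (\<chi> i j. Tx T x i j) = 0"
  shows "\<exists>z nv g2 g3. \<forall>x. tri T x x x = tri T p p p * (lin z x)^3 + g2 * lin z x * (lin nv x)^2 + g3 * (lin nv x)^3"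
proof -
  define c where "c = tri T p p p"
  have cn': "c \<noteq> 0" using cn c_def by simp
  define \<alpha> where "\<alpha> = tri T p p (ev 1) / c"
  define \<beta> where "\<beta> = tri T p p (ev 2) / c"
  define b1 where "b1 = ev 1 + (-\<alpha>) *s p"
  define b2 where "b2 = ev 2 + (-\<beta>) *s p"
  have sy: "tri T b1 b2 b1 = tri T b1 b1 b2"
    "tri T b1 p b1 = tri T b1 b1 p"
    "tri T b1 p b2 = tri T b1 b2 p"
    "tri T b2 b1 b1 = tri T b1 b1 b2"
    "tri T b2 b1 b2 = tri T b1 b2 b2"
    "tri T b2 b1 p = tri T b1 b2 p"
    "tri T b2 b2 b1 = tri T b1 b2 b2"
    "tri T b2 p b1 = tri T b1 b2 p"
    "tri T b2 p b2 = tri T b2 b2 p"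
    "tri T p b1 b1 = tri T b1 b1 p"
    "tri T p b1 b2 = tri T b1 b2 p"
    "tri T p b1 p = tri T b1 p p"
    "tri T p b2 b1 = tri T b1 b2 p"
    "tri T p b2 b2 = tri T b2 b2 p"
    "tri T p b2 p = tri T b2 p p"
    "tri T p p b1 = tri T b1 p p"
    "tri T p p b2 = tri T b2 p p"
    using tri_swap12[OF sT] tri_swap23[OF sT] by metis+
  have z1: "tri T b1 p p = 0"
  proof -
    have "tri T b1 p p = tri T p p b1" using tri_swap12[OF sT] tri_swap23[OF sT] by metis
    also have "\<dots> = tri T p p (ev 1) - \<alpha> * c" unfolding b1_def tri_add3 tri_sm3 c_def by simp
    also have "\<dots> = 0" unfolding \<alpha>_def using cn' by simp
    finally show ?thesis .
  qed
  have z2: "tri T b2 p p = 0"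
  proof -
    have "tri T b2 p p = tri T p p b2" using tri_swap12[OF sT] tri_swap23[OF sT] by metis
    also have "\<dots> = tri T p p (ev 2) - \<beta> * c" unfolding b2_def tri_add3 tri_sm3 c_def by simp
    also have "\<dots> = 0" unfolding \<beta>_def using cn' by simp
    finally show ?thesis .
  qed
  define q11 where "q11 = tri T b1 b1 p"
  define q12 where "q12 = tri T b1 b2 p"
  define q22 where "q22 = tri T b2 b2 p"
  define c1 where "c1 = tri T b1 b1 b1"
  define c2 where "c2 = tri T b1 b1 b2"
  define c3 where "c3 = tri T b1 b2 b2"
  define c4 where "c4 = tri T b2 b2 b2"
  note nm = q11_def[symmetric] q12_def[symmetric] q22_def[symmetric] c1_def[symmetric] c2_def[symmetric]
    c3_def[symmetric] c4_def[symmetric] c_def[symmetric]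
  define bb where "bb = (\<lambda>i::3. if i = 1 then b1 else if i = 2 then b2 else p)"
  have dz: "dpoly c q11 q12 q22 c1 c2 c3 c4 y1 y2 z = 0" for y1 y2 z
  proof -
    define w where "w = y1 *s b1 + y2 *s b2 + z *s p"
    have "det (\<chi> i j. tri T (bb i) (bb j) w) = 0" unfolding det_congr hd by simp
    moreover have "det (\<chi> i j. tri T (bb i) (bb j) w) = dpoly c q11 q12 q22 c1 c2 c3 c4 y1 y2 z"
      unfolding det_3 dpoly_def Let_def
      by (simp add: bb_def w_def tri_add3 tri_sm3 sy z1 z2 nm algebra_simps)
    ultimately show ?thesis by simp
  qed
  obtain n1 n2 lam gam where NF: "q11 = lam*n1^2" "q12 = lam*n1*n2" "q22 = lam*n2^2"
      "c1 = gam*n1^3" "c2 = gam*n1^2*n2" "c3 = gam*n1*n2^2" "c4 = gam*n2^3"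
    using NF_alg[OF cn' dz] by blast
  define zv where "zv = (\<chi> i::3. if i = 1 then \<alpha> else if i = 2 then \<beta> else (1 - \<alpha>*p$1 - \<beta>*p$2)/p$3)"
  define nv where "nv = (\<chi> i::3. if i = 1 then n1 else if i = 2 then n2 else -(n1*p$1 + n2*p$2)/p$3)"
  have main: "tri T x x x = c * (lin zv x)^3 + (3*lam) * lin zv x * (lin nv x)^2 + gam * (lin nv x)^3" for x
  proof -
    define y1 where "y1 = x$1 - p$1/p$3 * x$3"
    define y2 where "y2 = x$2 - p$2/p$3 * x$3"
    define y3 where "y3 = x$3/p$3 + \<alpha>*y1 + \<beta>*y2"
    have xd: "x = y1 *s b1 + y2 *s b2 + y3 *s p"
      unfolding vec_eq_iff forall_3 using p3
      by (simp add: y1_def y2_def y3_def b1_def b2_def ev_def field_simps)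
    have lz: "lin zv x = y3" unfolding zv_def lin_vec3 y3_def y1_def y2_def using p3
      by (simp add: field_simps)
    have ln: "lin nv x = n1*y1 + n2*y2" unfolding nv_def lin_vec3 y1_def y2_def using p3
      by (simp add: field_simps)
    have "tri T x x x = c*y3^3 + 3*y3*(q11*y1^2 + 2*q12*y1*y2 + q22*y2^2) + c1*y1^3 + 3*c2*y1^2*y2 + 3*c3*y1*y2^2 + c4*y2^3"
      apply (subst xd)+
      apply (simp only: tri_add1 tri_add2 tri_add3 tri_sm1 tri_sm2 tri_sm3 sy z1 z2 nm)
      apply (simp add: algebra_simps power2_eq_square power3_eq_cube)
      done
    also have "\<dots> = c * y3^3 + (3*lam) * y3 * (n1*y1 + n2*y2)^2 + gam * (n1*y1 + n2*y2)^3"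
      unfolding NF by (simp add: algebra_simps power2_eq_square power3_eq_cube)
    finally show ?thesis unfolding lz ln .
  qed
  show ?thesis using main unfolding c_def by blast
qed

definition cnt :: "3 \<Rightarrow> 3 \<Rightarrow> 3 \<Rightarrow> 3 \<Rightarrow> nat" where
  "cnt v i j k = (if i = v then 1 else 0) + (if j = v then 1 else 0) + (if k = v then 1 else 0)"
definition tens_of :: "(nat \<Rightarrow> nat \<Rightarrow> complex) \<Rightarrow> (3\<Rightarrow>3\<Rightarrow>3\<Rightarrow>complex)" where
  "tens_of c i j k = c (cnt 1 i j k) (cnt 2 i j k) *
     of_nat (fact (cnt 1 i j k) * fact (cnt 2 i j k) * fact (cnt 3 i j k)) / 6"

lemma cnt_sw: "cnt v i j k = cnt v j i k" "cnt v i j k = cnt v i k j"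
  unfolding cnt_def by (simp_all only: add_ac)

lemma symT_tens: "symT (tens_of c)"
  unfolding symT_def tens_of_def by (metis cnt_sw)

lemma rhs: fixes x :: "complex^3" shows "(\<Sum>i\<le>3. \<Sum>j\<le>3 - i. c i j * (x$1)^i * (x$2)^j * (x$3)^(3 - i - j)) =
  c 0 0 * (x$3)^3 + c 0 1 * x$2 * (x$3)^2 + c 0 2 * (x$2)^2 * x$3 + c 0 3 * (x$2)^3
  + c 1 0 * x$1 * (x$3)^2 + c 1 1 * x$1 * x$2 * x$3 + c 1 2 * x$1 * (x$2)^2
  + c 2 0 * (x$1)^2 * x$3 + c 2 1 * (x$1)^2 * x$2 + c 3 0 * (x$1)^3"
  by (simp add: numeral_3_eq_3 numeral_2_eq_2 atMost_Suc mult_ac)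

lemma lhs: fixes x :: "complex^3" shows "tri (tens_of c) x x x =
  c 0 0 * (x$3)^3 + c 0 1 * x$2 * (x$3)^2 + c 0 2 * (x$2)^2 * x$3 + c 0 3 * (x$2)^3
  + c 1 0 * x$1 * (x$3)^2 + c 1 1 * x$1 * x$2 * x$3 + c 1 2 * x$1 * (x$2)^2
  + c 2 0 * (x$1)^2 * x$3 + c 2 1 * (x$1)^2 * x$2 + c 3 0 * (x$1)^3"
  by (simp add: tri_def sum_3 tens_of_def cnt_def numeral_3_eq_3 numeral_2_eq_2 algebra_simps power2_eq_square power3_eq_cube)

lemma tri_tens: "tri (tens_of c) x x x = (\<Sum>i\<le>3. \<Sum>j\<le>3 - i. c i j * (x$1)^i * (x$2)^j * (x$3)^(3 - i - j))"
  unfolding lhs rhs ..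

lemma cubic_tensor:
  assumes "ternary_cubic f" shows "\<exists>T. symT T \<and> (\<forall>x. f x = tri T x x x)"
proof -
  obtain c where c: "\<And>x. f x = (\<Sum>i\<le>3. \<Sum>j\<le>3 - i. c i j * (x$1)^i * (x$2)^j * (x$3)^(3 - i - j))"
    using assms unfolding ternary_cubic_def by blast
  show ?thesis using symT_tens[of c] c tri_tens[of c] by metis
qed

lemma nonzero_point:
  assumes sT: "symT T" and nz: "tri T p0 p0 p0 \<noteq> 0"
  shows "\<exists>p. p$3 \<noteq> 0 \<and> tri T p p p \<noteq> 0"
proof (cases "p0$3 = 0")
  case False then show ?thesis using nz by blast
next
  case True
  define A where "A = tri T p0 p0 p0"
  define B where "B = 3 * tri T (ev 3) p0 p0"
  define C where "C = 3 * tri T (ev 3) (ev 3) p0"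
  define D where "D = tri T (ev 3) (ev 3) (ev 3)"
  have h: "tri T (p0 + s *s ev 3) (p0 + s *s ev 3) (p0 + s *s ev 3) = A + B * s + C * s^2 + D * s^3" for s
    unfolding tri_upd[OF sT] A_def B_def C_def D_def by (simp add: mult_ac)
  have c3: "(p0 + s *s ev 3)$3 = s" for s using True by (simp add: ev_def)
  show ?thesis
  proof (rule ccontr)
    assume "\<not> ?thesis"
    then have nn: "\<And>p. p$3 \<noteq> 0 \<Longrightarrow> tri T p p p = 0" by blast
    have hz: "A + B * s + C * s^2 + D * s^3 = 0" if "s \<noteq> 0" for s
    proof -
      have "(p0 + s *s ev 3)$3 \<noteq> 0" using c3[of s] that by simp
      then have "tri T (p0 + s *s ev 3) (p0 + s *s ev 3) (p0 + s *s ev 3) = 0" using nn by blast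
      then show ?thesis using h[of s] by simp
    qed
    have e: "A + B + C + D = 0" "A + B*2 + C*4 + D*8 = 0" "A + B*3 + C*9 + D*27 = 0" "A + B*4 + C*16 + D*64 = 0"
      using hz[of 1] hz[of 2] hz[of 3] hz[of 4] by (simp_all add: power2_eq_square power3_eq_cube)
    have "A = 4*(A + B + C + D) - 6*(A + B*2 + C*4 + D*8) + 4*(A + B*3 + C*9 + D*27) - (A + B*4 + C*16 + D*64)"
      by (simp add: algebra_simps)
    then have "A = 0" using e by simp
    then show False using nz A_def by simp
  qed
qed

theorem main:
  fixes f :: "complex^3 \<Rightarrow> complex"
  assumes "ternary_cubic f"
  shows "((Hessian f = (\<lambda>x. 0) \<and> (\<exists>u x. F6u f u x \<noteq> 0))
          \<longleftrightarrow> (\<exists>a0 b0 a b. a0 \<noteq> 0 \<and> b0 \<noteq> 0 \<and> lin_indep2 a b \<and>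
                 f = (\<lambda>x. a0 * (lin a x)^3 + b0 * (lin b x)^3)))
       \<and> ((\<exists>a0 b0 a b. a0 \<noteq> 0 \<and> b0 \<noteq> 0 \<and> lin_indep2 a b \<and>
                 f = (\<lambda>x. a0 * (lin a x)^3 + b0 * (lin b x)^3))
          \<longleftrightarrow> (\<exists>a b c. lin_dep3 a b c \<and> lin_indep2 a b \<and> lin_indep2 a c \<and> lin_indep2 b c \<and>
                 f = (\<lambda>x. lin a x * lin b x * lin c x)))"
  (is "(?P1 \<longleftrightarrow> ?P2) \<and> (?P2 \<longleftrightarrow> ?P3)")
proof -
  have p23: "?P2 \<Longrightarrow> ?P3"
  proof -
    assume ?P2
    then obtain a0 b0 a b where h: "a0 \<noteq> 0" "b0 \<noteq> 0" "lin_indep2 a b"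
        "f = (\<lambda>x. a0 * (lin a x)^3 + b0 * (lin b x)^3)" by blast
    show ?P3 using two_to_three[OF h(1-3)] h(4) by simp
  qed
  have p32: "?P3 \<Longrightarrow> ?P2"
  proof -
    assume ?P3
    then obtain a b c where h: "lin_dep3 a b c" "lin_indep2 a b" "lin_indep2 a c" "lin_indep2 b c"
        "f = (\<lambda>x. lin a x * lin b x * lin c x)" by blast
    show ?P2 using three_to_two[OF h(1-4)] h(5) by simp
  qed
  have p21: "?P2 \<Longrightarrow> ?P1"
  proof -
    assume ?P2
    then obtain a0 b0 a b where h: "a0 \<noteq> 0" "b0 \<noteq> 0" "lin_indep2 a b"
        "f = (\<lambda>x. a0 * (lin a x)^3 + b0 * (lin b x)^3)" by blast
    have fc: "\<And>x. f x = tri (cone a0 0 0 b0 a b) x x x" unfolding tri_cone h(4) by simp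
    have "Hessian f = (\<lambda>x. 0)" using Hessian_cone[OF fc] by (simp add: fun_eq_iff)
    moreover obtain u where u: "det3 a b u \<noteq> 0" using indep_det[OF h(3)] by blast
    have "F6u f u 0 \<noteq> 0" unfolding F6u_cone[OF fc] disc_def using u h(1,2) by simp
    ultimately show ?P1 by blast
  qed
  have p12: "?P1 \<Longrightarrow> ?P2"
  proof -
    assume P1: ?P1
    obtain T where sT: "symT T" and fT: "\<And>x. f x = tri T x x x" using cubic_tensor[OF assms] by blast
    obtain u x0 where F: "F6u f u x0 \<noteq> 0" using P1 by blast
    have hd: "det (\<chi> i j. Tx T x i j) = 0" for x
    proof -
      have "Hessian f x = 0" using P1 by simp
      then show ?thesis unfolding Hessian_tri[OF sT fT] Dm_det by simp
    qed
    have "\<exists>p0. tri T p0 p0 p0 \<noteq> 0"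
    proof (rule ccontr)
      assume "\<not> ?thesis"
      then have "\<And>x. f x = tri (cone 0 0 0 0 u u) x x x" using fT by (simp add: tri_cone)
      then have "F6u f u x0 = (det3 u u u)^6 * disc 0 0 0 0 / 16" by (rule F6u_cone)
      then have "F6u f u x0 = 0" by (simp add: disc_def)
      then show False using F by simp
    qed
    then obtain p0 where "tri T p0 p0 p0 \<noteq> 0" by blast
    then obtain p where p3: "p$3 \<noteq> 0" and cn: "tri T p p p \<noteq> 0" using nonzero_point[OF sT] by blast
    obtain z nv g2 g3 where nf: "\<And>x. tri T x x x = tri T p p p * (lin z x)^3 + g2 * lin z x * (lin nv x)^2 + g3 * (lin nv x)^3"
      using normal_form[OF sT p3 cn hd] by blast
    define c where "c = tri T p p p"
    have fe: "f x = c * (lin z x)^3 + g2 * lin z x * (lin nv x)^2 + g3 * (lin nv x)^3" for x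
      unfolding c_def by (simp only: fT[of x] nf[of x])
    have fc: "\<And>x. f x = tri (cone c 0 g2 g3 z nv) x x x" unfolding tri_cone fe by simp
    have "(det3 z nv u)^6 * disc c 0 g2 g3 / 16 \<noteq> 0" using F F6u_cone[OF fc] by simp
    then have dz: "det3 z nv u \<noteq> 0" and dd: "disc c 0 g2 g3 \<noteq> 0" by auto
    have cn': "c \<noteq> 0" using cn c_def by simp
    have ?P3 by (rule binary_factor[OF cn' det3_indep[OF dz] dd fe])
    then show ?P2 by (rule p32)
  qed
  show ?thesis using p12 p21 p23 p32 by blast
qed

theorem lemma7p3:
  fixes f :: "complex^3 \<Rightarrow> complex"
  assumes "ternary_cubic f"
  shows "((Hessian f = (\<lambda>x. 0) \<and> (\<exists>u x. F6u f u x \<noteq> 0))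
          \<longleftrightarrow> (\<exists>a0 b0 a b. a0 \<noteq> 0 \<and> b0 \<noteq> 0 \<and> lin_indep2 a b \<and>
                 f = (\<lambda>x. a0 * (lin a x)^3 + b0 * (lin b x)^3)))
       \<and> ((\<exists>a0 b0 a b. a0 \<noteq> 0 \<and> b0 \<noteq> 0 \<and> lin_indep2 a b \<and>
                 f = (\<lambda>x. a0 * (lin a x)^3 + b0 * (lin b x)^3))
          \<longleftrightarrow> (\<exists>a b c. lin_dep3 a b c \<and> lin_indep2 a b \<and> lin_indep2 a c \<and> lin_indep2 b c \<and>
                 f = (\<lambda>x. lin a x * lin b x * lin c x)))"
    by (rule main[OF assms])

end
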